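(* Let $\delta\in(0,1)$, and for $w\in A^*$ with $\min_{1\le\ell\le L}N_{n-1,\ell}(w)>0$ and $\ell=1,\dots,L$ let $\mathrm{conf}^I_\ell(w)=c_\ell\big(w,\frac{\delta}{n^2|\mathcal S|L}\big)$. If the confidence radius is set to $\mathrm{conf}_\ell(w)=\min\{\mathrm{conf}^I_\ell(w),1\}$, then with probability at least $1-\delta$ the event $\mathrm{Good}_\infty$ occurs.
   Context: $A$ is a finite alphabet; $A^{-1}_{-\infty}$ is the set of left-infinite sequences $x=\cdots x_{-2}x_{-1}$ over $A$, and $A^*$ the set of finite strings (including the empty string) and left-infinite sequences. For $\ell=1,\dots,L$, $X(\ell)=(X_t(\ell))_{t\in\mathbb Z}$ is a stationary ergodic $A$-valued process with transition probabilities $p_\ell(a\mid x)=\Pr(X_0(\ell)=a\mid X^{-1}_{-\infty}(\ell)=x)$; one observes $X_1^n(\ell)$ for each $\ell$. For a finite string $w$, $N_{j,\ell}(w)$ is the number of occurrences of $w$ as a block of consecutive symbols in $X_1^j(\ell)$ (0 for infinite $w$); $wa$ is concatenation. For $w$ with $\min_\ell N_{n-1,\ell}(w)>0$ and $S\subseteq A$: $\hat p_{n,\ell}(S\mid w)=\sum_{a\in S}N_{n,\ell}(wa)/N_{n-1,\ell}(w)$ and $\bar p_{n,\ell}(S\mid w)=\frac{1}{N_{n-1,\ell}(w)}\sum_{i=|w|+1}^{n}\mathbf 1\{X^{i-1}_{i-|w|}(\ell)=w\}p_\ell(S\mid X^{i-1}_{-\infty}(\ell))$. The family $\mathcal S$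 is either $\{\{a\}:a\in A\}$ or $2^A$, and every $d_\ell$ is $d_\ell(q,q')=\max_{S\in\mathcal S}|q(S)-q'(S)|$. For $w$ with $N_{n-1,\ell}(w)>0$ and $\epsilon\in(0,1)$, $c_\ell(w,\epsilon)=2\sqrt{\frac{1}{N_{n-1,\ell}(w)}}\sqrt{\log(1/\epsilon)+2\log(2+2\log N_{n-1,\ell}(w))}$. For $v\in\mathbb R^L$, $\|v\|_{L,\infty}=\max_\ell|v_\ell|$. The event $\mathrm{Good}_\infty$: for every $w\in A^*$ with $\min_\ell N_{n-1,\ell}(w)>0$, $\max_{\ell}d_\ell(\bar p_{n,\ell}(\cdot\mid w),\hat p_{n,\ell}(\cdot\mid w))/\mathrm{conf}_\ell(w)\le1$. *)

theory Defs
  imports "HOL-Probability.Probability"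
begin

text \<open>Processes: X l t w is the value X_t(l) at time t (integer) in outcome w.
  A left-infinite sequence x = ... x_{-2} x_{-1} is encoded as a function nat => 'a
  with (enc x) k = x_{-(k+1)}, i.e. index 0 is the most recent symbol.
  Finite strings are lists in time order (left to right).\<close>

definition seqM :: "(int \<Rightarrow> 'a) measure" where
  "seqM = PiM UNIV (\<lambda>_. count_space UNIV)"

definition pastM :: "(nat \<Rightarrow> 'a) measure" where
  "pastM = PiM UNIV (\<lambda>_. count_space UNIV)"

definition path :: "(nat \<Rightarrow> int \<Rightarrow> 'b \<Rightarrow> 'a) \<Rightarrow> nat \<Rightarrow> 'b \<Rightarrow> int \<Rightarrow> 'a" where
  "path X l \<omega> = (\<lambda>t. X l t \<omega>)"

definition past :: "(nat \<Rightarrow> int \<Rightarrow> 'b \<Rightarrow> 'a) \<Rightarrow> nat \<Rightarrow> int \<Rightarrow> 'b \<Rightarrow> nat \<Rightarrow> 'a" where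
  "past X l i \<omega> = (\<lambda>k. X l (i - 1 - int k) \<omega>)"

definition shift :: "(int \<Rightarrow> 'a) \<Rightarrow> int \<Rightarrow> 'a" where
  "shift x = (\<lambda>t. x (t + 1))"

definition stationary_ergodic ::
  "'b measure \<Rightarrow> (nat \<Rightarrow> int \<Rightarrow> 'b \<Rightarrow> 'a) \<Rightarrow> nat \<Rightarrow> bool" where
  "stationary_ergodic M X l \<longleftrightarrow>
     (\<forall>t. X l t \<in> measurable M (count_space UNIV)) \<and>
     distr M seqM (\<lambda>\<omega>. shift (path X l \<omega>)) = distr M seqM (path X l) \<and>
     (\<forall>B \<in> sets seqM. shift -` B = B \<longrightarrow>
        emeasure (distr M seqM (path X l)) B \<in> {0, 1})"

text \<open>p l x a = Pr(X_0(l) = a | X^{-1}_{-\<infinity>}(l) = x), a (regular) version of the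
  conditional distribution of X_0(l) given its infinite past.\<close>
definition is_transition_prob ::
  "'b measure \<Rightarrow> (nat \<Rightarrow> int \<Rightarrow> 'b \<Rightarrow> 'a::finite) \<Rightarrow> nat \<Rightarrow> ((nat \<Rightarrow> 'a) \<Rightarrow> 'a \<Rightarrow> real) \<Rightarrow> bool" where
  "is_transition_prob M X l p \<longleftrightarrow>
     (\<forall>x a. 0 \<le> p x a) \<and> (\<forall>x. (\<Sum>a\<in>UNIV. p x a) = 1) \<and>
     (\<forall>a. (\<lambda>x. p x a) \<in> borel_measurable pastM) \<and>
     (\<forall>a. \<forall>B \<in> sets pastM.
        measure M {\<omega> \<in> space M. X l 0 \<omega> = a \<and> past X l 0 \<omega> \<in> B}
        = (\<integral>\<omega>. indicator B (past X l 0 \<omega>) * p (past X l 0 \<omega>) a \<partial>M))"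

definition pset :: "((nat \<Rightarrow> 'a) \<Rightarrow> 'a \<Rightarrow> real) \<Rightarrow> 'a set \<Rightarrow> (nat \<Rightarrow> 'a) \<Rightarrow> real" where
  "pset p S x = (\<Sum>a\<in>S. p x a)"

definition occ_at :: "(nat \<Rightarrow> int \<Rightarrow> 'b \<Rightarrow> 'a) \<Rightarrow> nat \<Rightarrow> 'b \<Rightarrow> 'a list \<Rightarrow> nat \<Rightarrow> bool" where
  "occ_at X l \<omega> w i \<longleftrightarrow>
     (\<forall>k < length w. X l (int i - int (length w) + 1 + int k) \<omega> = w ! k)"

text \<open>N_{j,l}(w): number of occurrences of w as a block in X_1^j(l)
  (the empty string occurs j+1 times, so that N_{n-1,l}([]) = n).\<close>
definition Ncount :: "(nat \<Rightarrow> int \<Rightarrow> 'b \<Rightarrow> 'a) \<Rightarrow> nat \<Rightarrow> 'b \<Rightarrow> nat \<Rightarrow> 'a list \<Rightarrow> nat" where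
  "Ncount X l \<omega> j w = card {i \<in> {length w..j}. occ_at X l \<omega> w i}"

definition phat ::
  "(nat \<Rightarrow> int \<Rightarrow> 'b \<Rightarrow> 'a) \<Rightarrow> nat \<Rightarrow> nat \<Rightarrow> 'b \<Rightarrow> 'a list \<Rightarrow> 'a set \<Rightarrow> real" where
  "phat X n l \<omega> w S =
     (\<Sum>a\<in>S. real (Ncount X l \<omega> n (w @ [a]))) / real (Ncount X l \<omega> (n - 1) w)"

definition pbar ::
  "(nat \<Rightarrow> int \<Rightarrow> 'b \<Rightarrow> 'a) \<Rightarrow> (nat \<Rightarrow> (nat \<Rightarrow> 'a) \<Rightarrow> 'a \<Rightarrow> real) \<Rightarrow> nat \<Rightarrow> nat \<Rightarrow> 'b
     \<Rightarrow> 'a list \<Rightarrow> 'a set \<Rightarrow> real" where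
  "pbar X p n l \<omega> w S =
     (1 / real (Ncount X l \<omega> (n - 1) w)) *
     (\<Sum>i = length w + 1..n.
        (if occ_at X l \<omega> w (i - 1) then 1 else 0) * pset (p l) S (past X l (int i) \<omega>))"

definition dist_fam :: "'a set set \<Rightarrow> ('a set \<Rightarrow> real) \<Rightarrow> ('a set \<Rightarrow> real) \<Rightarrow> real" where
  "dist_fam Sfam q q' = Max ((\<lambda>S. \<bar>q S - q' S\<bar>) ` Sfam)"

definition cfun :: "nat \<Rightarrow> real \<Rightarrow> real" where
  "cfun N \<epsilon> = 2 * sqrt (1 / real N) * sqrt (ln (1 / \<epsilon>) + 2 * ln (2 + 2 * ln (real N)))"

definition conf ::
  "(nat \<Rightarrow> int \<Rightarrow> 'b \<Rightarrow> 'a) \<Rightarrow> nat \<Rightarrow> nat \<Rightarrow> real \<Rightarrow> 'a set set \<Rightarrow> nat \<Rightarrow> 'b \<Rightarrow> 'a list \<Rightarrow> real" where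
  "conf X n L \<delta> Sfam l \<omega> w =
     min (cfun (Ncount X l \<omega> (n - 1) w) (\<delta> / (real n ^ 2 * real (card Sfam) * real L))) 1"

definition Good_inf ::
  "(nat \<Rightarrow> int \<Rightarrow> 'b \<Rightarrow> 'a) \<Rightarrow> (nat \<Rightarrow> (nat \<Rightarrow> 'a) \<Rightarrow> 'a \<Rightarrow> real) \<Rightarrow> nat \<Rightarrow> nat \<Rightarrow> real
     \<Rightarrow> 'a set set \<Rightarrow> 'b \<Rightarrow> bool" where
  "Good_inf X p n L \<delta> Sfam \<omega> \<longleftrightarrow>
     (\<forall>w :: 'a list. (\<forall>l \<in> {1..L}. Ncount X l \<omega> (n - 1) w > 0) \<longrightarrow>
        Max ((\<lambda>l. dist_fam Sfam (pbar X p n l \<omega> w) (phat X n l \<omega> w)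
                   / conf X n L \<delta> Sfam l \<omega> w) ` {1..L}) \<le> 1)"

end

theory Submission
  imports Defs
begin

lemma space_pastM[simp]: "space pastM = UNIV"
  by (simp add: pastM_def space_PiM)
lemma space_seqM[simp]: "space seqM = UNIV"
  by (simp add: seqM_def space_PiM)

lemma meas_pastM_comp[measurable]:
  "(\<lambda>x. x j) \<in> measurable pastM (count_space UNIV)"
  unfolding pastM_def by (rule measurable_component_singleton) simp

lemma meas_seqM_comp[measurable]:
  "(\<lambda>x. x j) \<in> measurable seqM (count_space UNIV)"
  unfolding seqM_def by (rule measurable_component_singleton) simp

lemma meas_into_pastM:
  assumes "\<And>k. (\<lambda>w. f w k) \<in> measurable N (count_space UNIV)"
  shows "f \<in> measurable N pastM"
proof -
  have "(\<lambda>w k. f w k) \<in> measurable N pastM"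
    unfolding pastM_def by (rule measurable_PiM_single') (use assms in auto)
  then show ?thesis by simp
qed

lemma meas_into_seqM:
  assumes "\<And>k. (\<lambda>w. f w k) \<in> measurable N (count_space UNIV)"
  shows "f \<in> measurable N seqM"
proof -
  have "(\<lambda>w k. f w k) \<in> measurable N seqM"
    unfolding seqM_def by (rule measurable_PiM_single') (use assms in auto)
  then show ?thesis by simp
qed


lemma hoeff_bern:
  fixes q t :: real
  assumes "0 \<le> q" "q \<le> 1"
  shows "q * exp (t * (1 - q)) + (1 - q) * exp (- t * q) \<le> exp (t\<^sup>2 / 8)"
proof -
  have main: "q * exp (h * (1 - q)) + (1 - q) * exp (- h * q) \<le> exp (h\<^sup>2 / 8)"
    if "0 \<le> q" "q \<le> 1" "0 \<le> h" for q h :: real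
  proof -
    have pos: "1 + q * (exp h - 1) > 0"
    proof -
      have "exp h \<ge> 1" using that by simp
      then have "q * (exp h - 1) \<ge> 0" using that by simp
      then show ?thesis by simp
    qed
    have "q * exp (h * (1 - q)) + (1 - q) * exp (- h * q) = exp (- h * q) * (1 + q * (exp h - 1))"
      by (simp add: algebra_simps exp_add[symmetric])
    also have "\<dots> = exp (- h * q + ln (1 + q * (exp h - 1)))"
      using pos by (simp only: exp_add exp_ln)
    also have "\<dots> \<le> exp (h\<^sup>2 / 8)"
      using Hoeffdings_lemma_aux[of h q] that by simp
    finally show ?thesis .
  qed
  show ?thesis
  proof (cases "t \<ge> 0")
    case True then show ?thesis using main[of q t] assms by simp
  next
    case False
    have "(1 - q) * exp ((- t) * (1 - (1 - q))) + (1 - (1 - q)) * exp (- (- t) * (1 - q)) \<le> exp ((- t)\<^sup>2 / 8)"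
      using False assms by (intro main) auto
    then show ?thesis by (simp add: algebra_simps)
  qed
qed

definition Zf :: "((nat \<Rightarrow> 'a) \<Rightarrow> 'a \<Rightarrow> real) \<Rightarrow> real \<Rightarrow> 'a set \<Rightarrow> ((nat \<Rightarrow> 'a) \<Rightarrow> real) \<Rightarrow> (nat \<Rightarrow> 'a) \<Rightarrow> 'a \<Rightarrow> real" where
  "Zf pl t S d x a = exp (t * d x * (indicator S a - pset pl S x) - t\<^sup>2 * d x / 8)"


lemma cfun_meas:
  assumes [measurable]: "(\<lambda>x. real (f x)) \<in> borel_measurable N"
  shows "(\<lambda>x. cfun (f x) c) \<in> borel_measurable N"
  unfolding cfun_def by measurable


definition dd :: "nat \<Rightarrow> nat \<Rightarrow> nat \<Rightarrow> (nat \<Rightarrow> 'a) \<Rightarrow> real" where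
  "dd e m i x = (if e < i \<and> (\<forall>j<m. x (m - 1 - j) = x (i - 1 - e + (m - 1 - j))) then 1 else 0)"

lemma dd01: "dd e m i x \<in> {0,1}" by (simp add: dd_def)

lemma pred_eq_coord: "Measurable.pred pastM (\<lambda>x::nat \<Rightarrow> 'a::countable. x a = x b)"
proof -
  have s: "{x\<in>space pastM. x c = v} \<in> sets pastM" for c and v :: 'a
    using pred_count_space_const1[OF meas_pastM_comp[of c], of v] unfolding pred_def by simp
  have "{x::nat \<Rightarrow> 'a\<in>space pastM. x a = x b} = (\<Union>v\<in>UNIV. {x\<in>space pastM. x a = v} \<inter> {x\<in>space pastM. x b = v})"
    by auto
  also have "\<dots> \<in> sets pastM"
    using s by (intro sets.countable_UN') auto
  finally show ?thesis unfolding pred_def .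
qed

lemma dd_meas: "dd e m i \<in> borel_measurable (pastM :: (nat \<Rightarrow> 'a::countable) measure)"
proof -
  have "Measurable.pred pastM (\<lambda>x::nat \<Rightarrow> 'a. e < i \<and> (\<forall>j<m. x (m - 1 - j) = x (i - 1 - e + (m - 1 - j))))"
    by (intro pred_intros_logic pred_intros_countable pred_intros_imp' pred_eq_coord) simp
  then show ?thesis unfolding dd_def pred_def
    by (intro measurable_If borel_measurable_const) simp_all
qed


lemma sum_ext_guard:
  fixes g :: "nat \<Rightarrow> real"
  shows "(\<Sum>i\<in>{k+1..n}. g i) = (\<Sum>i\<in>{1..n}. if k + 1 \<le> i then g i else 0)"
proof -
  have "(\<Sum>i\<in>{1..n}. if k + 1 \<le> i then g i else 0) = sum g {i\<in>{1..n}. k + 1 \<le> i}"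
    by (rule sum.inter_filter[symmetric]) simp
  also have "{i\<in>{1..n}. k + 1 \<le> i} = {k+1..n}" by auto
  finally show ?thesis by simp
qed

lemma sum_shift1:
  fixes f :: "nat \<Rightarrow> real"
  assumes "1 \<le> n"
  shows "(\<Sum>i\<in>{k+1..n}. f (i - 1)) = (\<Sum>i\<in>{k..n-1}. f i)"
proof -
  have "n = Suc (n - 1)" using assms by simp
  then have "(\<Sum>i\<in>{k+1..n}. f (i - 1)) = (\<Sum>i\<in>{Suc k..Suc (n-1)}. f (i - 1))" by simp
  also have "\<dots> = (\<Sum>i\<in>{k..n-1}. f i)" by (subst sum.shift_bounds_cl_Suc_ivl) simp
  finally show ?thesis .
qed


lemma cfun_facts:
  assumes k: "1 \<le> k" and e0: "0 < \<epsilon>" and e1: "\<epsilon> < 1"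
  shows "0 < cfun k \<epsilon>" and "exp (- (2 * (cfun k \<epsilon>)\<^sup>2 * real k)) \<le> \<epsilon> ^ 8 / 65536"
proof -
  define V where "V = ln (1 / \<epsilon>) + 2 * ln (2 + 2 * ln (real k))"
  have l1: "0 < ln (1 / \<epsilon>)" using e0 e1 by simp
  have lk: "0 \<le> ln (real k)" using k by simp
  have l2: "ln 2 \<le> ln (2 + 2 * ln (real k))" using lk by simp
  have l20: "0 < ln (2::real)" by simp
  have V: "ln (1 / \<epsilon>) + 2 * ln 2 \<le> V" unfolding V_def using l2 by simp
  have Vp: "0 < V" using V l1 l20 by linarith
  have cdef: "cfun k \<epsilon> = 2 * sqrt (1 / real k) * sqrt V" by (simp add: cfun_def V_def)
  show "0 < cfun k \<epsilon>" unfolding cdef using Vp k by simp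
  have "(cfun k \<epsilon>)\<^sup>2 = 4 * (1 / real k) * V" unfolding cdef using Vp k
    by (simp add: power_mult_distrib)
  then have K: "2 * (cfun k \<epsilon>)\<^sup>2 * real k = 8 * V" using k by simp
  have "exp (- (2 * (cfun k \<epsilon>)\<^sup>2 * real k)) = exp (- 8 * V)" by (simp add: K)
  also have "\<dots> \<le> exp (real 8 * ln \<epsilon> + real 16 * ln (1/2))"
    using V e0 by (simp add: ln_div)
  also have "\<dots> = \<epsilon> ^ 8 / 65536"
    by (simp only: exp_add exp_of_nat_mult exp_ln e0) (simp add: power_divide)
  finally show "exp (- (2 * (cfun k \<epsilon>)\<^sup>2 * real k)) \<le> \<epsilon> ^ 8 / 65536" .
qed

locale proc =
  fixes M :: "'b measure" and X :: "nat \<Rightarrow> int \<Rightarrow> 'b \<Rightarrow> 'a::finite" and l :: nat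
    and pl :: "(nat \<Rightarrow> 'a) \<Rightarrow> 'a \<Rightarrow> real"
  assumes PS: "prob_space M" and SE: "stationary_ergodic M X l" and TP: "is_transition_prob M X l pl"
begin

sublocale prob_space M by (rule PS)

lemma X_meas[measurable]: "X l t \<in> measurable M (count_space UNIV)"
  using SE unfolding stationary_ergodic_def by auto

lemma past_meas[measurable]: "past X l i \<in> measurable M pastM"
  unfolding past_def by (rule meas_into_pastM) simp

lemma path_meas[measurable]: "path X l \<in> measurable M seqM"
  unfolding path_def by (rule meas_into_seqM) simp

lemma shift_meas[measurable]: "shift \<in> measurable seqM seqM"
  unfolding shift_def by (rule meas_into_seqM) simp

lemma pl_nonneg: "0 \<le> pl x a" using TP unfolding is_transition_prob_def by auto
lemma pl_sum: "(\<Sum>a\<in>UNIV. pl x a) = 1" using TP unfolding is_transition_prob_def by auto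
lemma pl_meas[measurable]: "(\<lambda>x. pl x a) \<in> borel_measurable pastM"
  using TP unfolding is_transition_prob_def by auto
lemma pl_le1: "pl x a \<le> 1"
proof -
  have "pl x a \<le> (\<Sum>b\<in>UNIV. pl x b)"
    by (rule member_le_sum) (auto simp: pl_nonneg)
  then show ?thesis by (simp add: pl_sum)
qed

lemma pset_nonneg: "0 \<le> pset pl S x" unfolding pset_def by (auto intro: sum_nonneg pl_nonneg)
lemma pset_le1: "pset pl S x \<le> 1"
proof -
  have "pset pl S x \<le> (\<Sum>b\<in>UNIV. pl x b)" unfolding pset_def
    by (rule sum_mono2) (auto simp: pl_nonneg)
  then show ?thesis by (simp add: pl_sum)
qed
lemma pset_meas[measurable]: "pset pl S \<in> borel_measurable pastM"
  unfolding pset_def by measurable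

lemma shift_stat: "distr M seqM (\<lambda>\<omega>. (shift ^^ i) (path X l \<omega>)) = distr M seqM (path X l)"
proof (induction i)
  case 0 then show ?case by simp
next
  case (Suc i)
  have m: "(\<lambda>\<omega>. (shift ^^ i) (path X l \<omega>)) \<in> measurable M seqM"
    by (induction i) (auto intro: measurable_compose[OF _ shift_meas])
  have "distr M seqM (\<lambda>\<omega>. (shift ^^ Suc i) (path X l \<omega>))
     = distr (distr M seqM (\<lambda>\<omega>. (shift ^^ i) (path X l \<omega>))) seqM shift"
    by (subst distr_distr[OF shift_meas m]) (simp add: comp_def)
  also have "\<dots> = distr (distr M seqM (path X l)) seqM shift" by (simp add: Suc)
  also have "\<dots> = distr M seqM (\<lambda>\<omega>. shift (path X l \<omega>))"
    by (subst distr_distr[OF shift_meas path_meas]) (simp add: comp_def)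
  also have "\<dots> = distr M seqM (path X l)" using SE unfolding stationary_ergodic_def by auto
  finally show ?case .
qed

lemma shift_pow: "(shift ^^ i) x = (\<lambda>t. x (t + int i))"
  by (induction i) (auto simp: shift_def algebra_simps)

lemma stat_integral:
  fixes G :: "(int \<Rightarrow> 'a) \<Rightarrow> real"
  assumes [measurable]: "G \<in> borel_measurable seqM"
  shows "(\<integral>\<omega>. G (\<lambda>t. X l (t + int i) \<omega>) \<partial>M) = (\<integral>\<omega>. G (path X l \<omega>) \<partial>M)"
proof -
  have m: "(\<lambda>\<omega>. (shift ^^ i) (path X l \<omega>)) \<in> measurable M seqM"
    by (induction i) (auto intro: measurable_compose[OF _ shift_meas])
  have "(\<integral>\<omega>. G (\<lambda>t. X l (t + int i) \<omega>) \<partial>M) = (\<integral>\<omega>. G ((shift ^^ i) (path X l \<omega>)) \<partial>M)"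
    by (simp add: shift_pow path_def)
  also have "\<dots> = integral\<^sup>L (distr M seqM (\<lambda>\<omega>. (shift ^^ i) (path X l \<omega>))) G"
    using integral_distr[OF m, of G] by simp
  also have "\<dots> = integral\<^sup>L (distr M seqM (path X l)) G" by (simp add: shift_stat)
  also have "\<dots> = (\<integral>\<omega>. G (path X l \<omega>) \<partial>M)" by (rule integral_distr) simp_all
  finally show ?thesis .
qed


lemma TP_eq: "B \<in> sets pastM \<Longrightarrow> measure M {\<omega> \<in> space M. X l 0 \<omega> = a \<and> past X l 0 \<omega> \<in> B}
        = (\<integral>\<omega>. indicator B (past X l 0 \<omega>) * pl (past X l 0 \<omega>) a \<partial>M)"
  using TP unfolding is_transition_prob_def by auto

lemma key:
  fixes v :: "(nat \<Rightarrow> 'a) \<Rightarrow> real"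
  assumes [measurable]: "v \<in> borel_measurable pastM"
  shows "(\<integral>\<omega>. indicator {\<omega>\<in>space M. X l 0 \<omega> = a} \<omega> * v (past X l 0 \<omega>) \<partial>M)
       = (\<integral>\<omega>. pl (past X l 0 \<omega>) a * v (past X l 0 \<omega>) \<partial>M)"
proof -
  define E where "E = {\<omega>\<in>space M. X l 0 \<omega> = a}"
  have E[measurable]: "E \<in> sets M" unfolding E_def by measurable
  define \<nu>1 where "\<nu>1 = distr (density M (\<lambda>\<omega>. ennreal (indicator E \<omega>))) pastM (past X l 0)"
  define \<nu>2 where "\<nu>2 = density (distr M pastM (past X l 0)) (\<lambda>x. ennreal (pl x a))"
  have eq: "\<nu>1 = \<nu>2"
  proof (rule measure_eqI)
    show "sets \<nu>1 = sets \<nu>2" unfolding \<nu>1_def \<nu>2_def by simp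
  next
    fix A assume "A \<in> sets \<nu>1"
    then have A[measurable]: "A \<in> sets pastM" unfolding \<nu>1_def by simp
    have "emeasure \<nu>1 A = emeasure (density M (\<lambda>\<omega>. ennreal (indicator E \<omega>))) (past X l 0 -` A \<inter> space M)"
      unfolding \<nu>1_def by (subst emeasure_distr) auto
    also have "\<dots> = (\<integral>\<^sup>+\<omega>. ennreal (indicator E \<omega>) * indicator (past X l 0 -` A \<inter> space M) \<omega> \<partial>M)"
      by (subst emeasure_density) auto
    also have "\<dots> = (\<integral>\<^sup>+\<omega>. indicator {\<omega> \<in> space M. X l 0 \<omega> = a \<and> past X l 0 \<omega> \<in> A} \<omega> \<partial>M)"
      by (intro nn_integral_cong) (auto simp: E_def indicator_def)
    also have "\<dots> = emeasure M {\<omega> \<in> space M. X l 0 \<omega> = a \<and> past X l 0 \<omega> \<in> A}"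
      by (subst nn_integral_indicator) auto
    also have "\<dots> = ennreal (measure M {\<omega> \<in> space M. X l 0 \<omega> = a \<and> past X l 0 \<omega> \<in> A})"
      by (simp add: emeasure_eq_measure)
    also have "\<dots> = ennreal (\<integral>\<omega>. indicator A (past X l 0 \<omega>) * pl (past X l 0 \<omega>) a \<partial>M)"
      by (simp add: TP_eq)
    also have "\<dots> = (\<integral>\<^sup>+\<omega>. ennreal (indicator A (past X l 0 \<omega>) * pl (past X l 0 \<omega>) a) \<partial>M)"
    proof (rule nn_integral_eq_integral[symmetric])
      show "integrable M (\<lambda>\<omega>. indicator A (past X l 0 \<omega>) * pl (past X l 0 \<omega>) a)"
        by (rule integrable_const_bound[where B=1]) (auto simp: indicator_def pl_nonneg pl_le1)
    qed (auto simp: pl_nonneg)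
    also have "\<dots> = (\<integral>\<^sup>+x. ennreal (pl x a) * indicator A x \<partial>distr M pastM (past X l 0))"
      by (subst nn_integral_distr) (auto intro!: nn_integral_cong simp: indicator_def)
    also have "\<dots> = emeasure \<nu>2 A" unfolding \<nu>2_def
      by (subst emeasure_density) auto
    finally show "emeasure \<nu>1 A = emeasure \<nu>2 A" .
  qed
  have "(\<integral>\<omega>. indicator {\<omega>\<in>space M. X l 0 \<omega> = a} \<omega> * v (past X l 0 \<omega>) \<partial>M)
      = (\<integral>\<omega>. indicator E \<omega> *\<^sub>R v (past X l 0 \<omega>) \<partial>M)" by (simp add: E_def)
  also have "\<dots> = integral\<^sup>L (density M (\<lambda>\<omega>. ennreal (indicator E \<omega>))) (\<lambda>\<omega>. v (past X l 0 \<omega>))"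
    by (rule integral_density[symmetric]) auto
  also have "\<dots> = integral\<^sup>L \<nu>1 v" unfolding \<nu>1_def
    by (rule integral_distr[symmetric]) auto
  also have "\<dots> = integral\<^sup>L \<nu>2 v" by (simp add: eq)
  also have "\<dots> = integral\<^sup>L (distr M pastM (past X l 0)) (\<lambda>x. pl x a *\<^sub>R v x)" unfolding \<nu>2_def
    by (rule integral_density) (auto simp: pl_nonneg)
  also have "\<dots> = (\<integral>\<omega>. pl (past X l 0 \<omega>) a * v (past X l 0 \<omega>) \<partial>M)"
    by (subst integral_distr) auto
  finally show ?thesis .
qed


definition P0 :: "(int \<Rightarrow> 'a) \<Rightarrow> nat \<Rightarrow> 'a" where "P0 y = (\<lambda>k. y (- 1 - int k))"

lemma P0_meas[measurable]: "P0 \<in> measurable seqM pastM"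
  unfolding P0_def by (rule meas_into_pastM) simp

lemma past_P0: "past X l (int i) \<omega> = P0 (\<lambda>t. X l (t + int i) \<omega>)"
  by (simp add: past_def P0_def algebra_simps)

lemma past0_P0: "past X l 0 \<omega> = P0 (path X l \<omega>)"
  by (simp add: past_def P0_def path_def algebra_simps)

lemma step:
  fixes u :: "(nat \<Rightarrow> 'a) \<Rightarrow> 'a \<Rightarrow> real"
  assumes um[measurable]: "\<And>a. (\<lambda>x. u x a) \<in> borel_measurable pastM"
    and ub: "\<And>x a. \<bar>u x a\<bar> \<le> B"
  shows "(\<integral>\<omega>. u (past X l (int i) \<omega>) (X l (int i) \<omega>) \<partial>M)
       = (\<integral>\<omega>. (\<Sum>a\<in>UNIV. pl (past X l (int i) \<omega>) a * u (past X l (int i) \<omega>) a) \<partial>M)"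
proof -
  have B0: "0 \<le> B" using ub[of undefined undefined] by linarith
  define G1 where "G1 = (\<lambda>y::int\<Rightarrow>'a. \<Sum>a\<in>UNIV. indicator {y. y 0 = a} y * u (P0 y) a)"
  define G2 where "G2 = (\<lambda>y::int\<Rightarrow>'a. \<Sum>a\<in>UNIV. pl (P0 y) a * u (P0 y) a)"
  have G1m[measurable]: "G1 \<in> borel_measurable seqM" unfolding G1_def by measurable
  have G2m[measurable]: "G2 \<in> borel_measurable seqM" unfolding G2_def by measurable
  have G1e: "G1 y = u (P0 y) (y 0)" for y
  proof -
    have "G1 y = (\<Sum>a\<in>UNIV. if a = y 0 then u (P0 y) a else 0)"
      unfolding G1_def by (intro sum.cong) (auto simp: indicator_def)
    also have "\<dots> = u (P0 y) (y 0)" by (simp add: sum.delta')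
    finally show ?thesis .
  qed
  have "(\<integral>\<omega>. u (past X l (int i) \<omega>) (X l (int i) \<omega>) \<partial>M) = (\<integral>\<omega>. G1 (\<lambda>t. X l (t + int i) \<omega>) \<partial>M)"
    by (simp add: G1e past_P0)
  also have "\<dots> = (\<integral>\<omega>. G1 (path X l \<omega>) \<partial>M)" by (rule stat_integral) simp
  also have "\<dots> = (\<integral>\<omega>. (\<Sum>a\<in>UNIV. indicator {\<omega>\<in>space M. X l 0 \<omega> = a} \<omega> * u (past X l 0 \<omega>) a) \<partial>M)"
    by (intro Bochner_Integration.integral_cong) (auto simp: G1_def past0_P0 path_def indicator_def)
  also have "\<dots> = (\<Sum>a\<in>UNIV. (\<integral>\<omega>. indicator {\<omega>\<in>space M. X l 0 \<omega> = a} \<omega> * u (past X l 0 \<omega>) a \<partial>M))"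
  proof (rule Bochner_Integration.integral_sum)
    fix a show "integrable M (\<lambda>\<omega>. indicator {\<omega>\<in>space M. X l 0 \<omega> = a} \<omega> * u (past X l 0 \<omega>) a)"
      by (rule integrable_const_bound[where B=B]) (auto simp: indicator_def ub B0)
  qed
  also have "\<dots> = (\<Sum>a\<in>UNIV. (\<integral>\<omega>. pl (past X l 0 \<omega>) a * u (past X l 0 \<omega>) a \<partial>M))"
    by (intro sum.cong refl key) simp
  also have "\<dots> = (\<integral>\<omega>. (\<Sum>a\<in>UNIV. pl (past X l 0 \<omega>) a * u (past X l 0 \<omega>) a) \<partial>M)"
  proof (rule Bochner_Integration.integral_sum[symmetric])
    fix a show "integrable M (\<lambda>\<omega>. pl (past X l 0 \<omega>) a * u (past X l 0 \<omega>) a)"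
    proof (rule integrable_const_bound[where B=B])
      show "AE x in M. norm (pl (past X l 0 x) a * u (past X l 0 x) a) \<le> B"
      proof (intro AE_I2)
        fix x
        have "\<bar>pl (past X l 0 x) a\<bar> * \<bar>u (past X l 0 x) a\<bar> \<le> 1 * B"
          by (intro mult_mono) (auto simp: pl_nonneg pl_le1 ub intro: order_trans[OF abs_ge_zero ub])
        then show "norm (pl (past X l 0 x) a * u (past X l 0 x) a) \<le> B" by (simp add: abs_mult)
      qed
    qed simp
  qed
  also have "\<dots> = (\<integral>\<omega>. G2 (path X l \<omega>) \<partial>M)" by (simp add: G2_def past0_P0)
  also have "\<dots> = (\<integral>\<omega>. G2 (\<lambda>t. X l (t + int i) \<omega>) \<partial>M)" by (rule stat_integral[symmetric]) simp
  also have "\<dots> = (\<integral>\<omega>. (\<Sum>a\<in>UNIV. pl (past X l (int i) \<omega>) a * u (past X l (int i) \<omega>) a) \<partial>M)"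
    by (simp add: G2_def past_P0)
  finally show ?thesis .
qed



lemma Zf_pos: "0 < Zf pl t S d x a" by (simp add: Zf_def)

lemma Zf_le: assumes "d x \<in> {0,1}" shows "Zf pl t S d x a \<le> exp \<bar>t\<bar>"
proof -
  have i: "0 \<le> indicator S a - pset pl S x + pset pl S x" "indicator S a - pset pl S x \<le> 1"
    using pset_nonneg[of S x] pset_le1[of S x] by (auto simp: indicator_def)
  have "\<bar>indicator S a - pset pl S x\<bar> \<le> 1"
    using pset_nonneg[of S x] pset_le1[of S x] by (auto simp: indicator_def)
  then have "t * d x * (indicator S a - pset pl S x) \<le> \<bar>t\<bar>"
  proof (cases "d x = 0")
    case False
    then have "d x = 1" using assms by auto
    moreover have "t * (indicator S a - pset pl S x) \<le> \<bar>t\<bar> * \<bar>indicator S a - pset pl S x\<bar>"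
      by (metis abs_ge_self abs_mult)
    moreover have "\<bar>t\<bar> * \<bar>indicator S a - pset pl S x\<bar> \<le> \<bar>t\<bar> * 1"
      by (rule mult_left_mono) (use \<open>\<bar>indicator S a - pset pl S x\<bar> \<le> 1\<close> in auto)
    ultimately show ?thesis by simp
  qed simp
  moreover have "t\<^sup>2 * d x / 8 \<ge> 0" using assms by auto
  ultimately show ?thesis unfolding Zf_def by simp
qed

lemma Zf_mean: assumes "d x \<in> {0,1}" shows "(\<Sum>a\<in>UNIV. pl x a * Zf pl t S d x a) \<le> 1"
proof (cases "d x = 0")
  case True then show ?thesis by (simp add: Zf_def pl_sum)
next
  case False
  then have d1: "d x = 1" using assms by auto
  define q where "q = pset pl S x"
  have "(\<Sum>a\<in>UNIV. pl x a * Zf pl t S d x a)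
      = (\<Sum>a\<in>UNIV. pl x a * exp (t * (indicator S a - q))) * exp (- t\<^sup>2 / 8)"
  proof -
    have "\<And>a. Zf pl t S d x a = exp (t * (indicator S a - q)) * exp (- t\<^sup>2 / 8)"
      by (simp add: Zf_def d1 q_def flip: exp_add)
    then show ?thesis by (simp add: sum_distrib_right mult.assoc)
  qed
  also have "(\<Sum>a\<in>UNIV. pl x a * exp (t * (indicator S a - q)))
      = (\<Sum>a\<in>S. pl x a * exp (t * (1 - q))) + (\<Sum>a\<in>UNIV - S. pl x a * exp (t * (0 - q)))"
  proof -
    have "(\<Sum>a\<in>UNIV. pl x a * exp (t * (indicator S a - q)))
       = (\<Sum>a\<in>S. pl x a * exp (t * (indicator S a - q))) + (\<Sum>a\<in>UNIV - S. pl x a * exp (t * (indicator S a - q)))"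
      by (metis (no_types, lifting) Diff_partition finite subset_UNIV sum.subset_diff add.commute)
    then show ?thesis by (simp add: indicator_def)
  qed
  also have "\<dots> = q * exp (t * (1 - q)) + (1 - q) * exp (- t * q)"
  proof -
    have "(\<Sum>a\<in>UNIV - S. pl x a) = 1 - q"
      using sum.subset_diff[of S UNIV "pl x"] pl_sum[of x] by (simp add: q_def pset_def)
    then show ?thesis by (simp add: q_def pset_def sum_distrib_right[symmetric])
  qed
  also have "(q * exp (t * (1 - q)) + (1 - q) * exp (- t * q)) * exp (- t\<^sup>2 / 8) \<le> exp (t\<^sup>2 / 8) * exp (- t\<^sup>2 / 8)"
    using hoeff_bern[of q t] pset_nonneg pset_le1 unfolding q_def
    by (intro mult_right_mono) auto
  also have "\<dots> = 1" by (simp flip: exp_add)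
  finally show ?thesis .
qed

lemma Zf_meas:
  assumes [measurable]: "d \<in> borel_measurable pastM" "g \<in> measurable N pastM" "h \<in> measurable N (count_space UNIV)"
  shows "(\<lambda>x. Zf pl t S d (g x) (h x)) \<in> borel_measurable N"
proof -
  have "(\<lambda>x. (\<lambda>a x. Zf pl t S d (g x) a) (h x) x) \<in> borel_measurable N"
    by (rule measurable_compose_countable) (auto simp: Zf_def)
  then show ?thesis by simp
qed


lemma shiftp_meas[measurable]: "(\<lambda>x k. x (k + c)) \<in> measurable pastM pastM"
  by (rule meas_into_pastM) simp

lemma prod_le1:
  assumes dm[measurable]: "\<And>i. d i \<in> borel_measurable pastM" and d01: "\<And>i x. d i x \<in> {0,1}"
  shows "(\<integral>\<omega>. (\<Prod>i\<in>{1..N}. Zf pl t S (d i) (past X l (int i) \<omega>) (X l (int i) \<omega>)) \<partial>M) \<le> 1"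
proof (induction N)
  case 0 then show ?case by (simp add: prob_space)
next
  case (Suc N)
  define Z where "Z = (\<lambda>i \<omega>. Zf pl t S (d i) (past X l (int i) \<omega>) (X l (int i) \<omega>))"
  define H where "H = (\<lambda>x. \<Prod>i\<in>{1..N}. Zf pl t S (d i) (\<lambda>k. x (k + (Suc N - i))) (x (N - i)))"
  have Hm[measurable]: "H \<in> borel_measurable pastM" unfolding H_def
    by (intro borel_measurable_prod Zf_meas dm shiftp_meas meas_pastM_comp)
  have Hb: "0 \<le> H x \<and> H x \<le> exp \<bar>t\<bar> ^ N" for x
  proof
    show "0 \<le> H x" unfolding H_def by (intro prod_nonneg) (auto intro: less_imp_le Zf_pos)
    have "H x \<le> exp \<bar>t\<bar> ^ card {1..N}" unfolding H_def
      by (intro prod_le_power) (auto intro: less_imp_le Zf_pos Zf_le[OF d01])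
    then show "H x \<le> exp \<bar>t\<bar> ^ N" by simp
  qed
  have Hrep: "(\<Prod>i\<in>{1..N}. Z i \<omega>) = H (past X l (int (Suc N)) \<omega>)" for \<omega>
    unfolding H_def Z_def
  proof (intro prod.cong refl)
    fix i assume i: "i \<in> {1..N}"
    have "past X l (int i) \<omega> = (\<lambda>k. past X l (int (Suc N)) \<omega> (k + (Suc N - i)))"
      using i by (auto simp: past_def of_nat_diff algebra_simps)
    moreover have "X l (int i) \<omega> = past X l (int (Suc N)) \<omega> (N - i)"
      using i by (auto simp: past_def of_nat_diff algebra_simps)
    ultimately show "Zf pl t S (d i) (past X l (int i) \<omega>) (X l (int i) \<omega>)
      = Zf pl t S (d i) (\<lambda>k. past X l (int (Suc N)) \<omega> (k + (Suc N - i))) (past X l (int (Suc N)) \<omega> (N - i))"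
      by simp
  qed
  define u where "u = (\<lambda>x a. H x * Zf pl t S (d (Suc N)) x a)"
  have um: "(\<lambda>x. u x a) \<in> borel_measurable pastM" for a unfolding u_def
    by (intro borel_measurable_times Hm Zf_meas dm measurable_ident_sets measurable_const) auto
  have ub: "\<bar>u x a\<bar> \<le> exp \<bar>t\<bar> ^ N * exp \<bar>t\<bar>" for x a
  proof -
    have "\<bar>u x a\<bar> = H x * Zf pl t S (d (Suc N)) x a" unfolding u_def
      using Hb[of x] Zf_pos[of t S "d (Suc N)" x a] by (simp add: abs_mult)
    also have "\<dots> \<le> exp \<bar>t\<bar> ^ N * exp \<bar>t\<bar>"
      by (intro mult_mono Zf_le d01) (use Hb[of x] Zf_pos[of t S "d (Suc N)" x a] in auto)
    finally show ?thesis .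
  qed
  have "(\<integral>\<omega>. (\<Prod>i\<in>{1..Suc N}. Z i \<omega>) \<partial>M) = (\<integral>\<omega>. u (past X l (int (Suc N)) \<omega>) (X l (int (Suc N)) \<omega>) \<partial>M)"
  proof (intro Bochner_Integration.integral_cong refl)
    fix \<omega>
    have "{1..Suc N} = insert (Suc N) {1..N}" by auto
    then have "(\<Prod>i\<in>{1..Suc N}. Z i \<omega>) = (\<Prod>i\<in>{1..N}. Z i \<omega>) * Z (Suc N) \<omega>" by simp
    also have "\<dots> = H (past X l (int (Suc N)) \<omega>) * Z (Suc N) \<omega>" by (simp only: Hrep)
    finally show "(\<Prod>i\<in>{1..Suc N}. Z i \<omega>) = u (past X l (int (Suc N)) \<omega>) (X l (int (Suc N)) \<omega>)"
      by (simp add: u_def Z_def)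
  qed
  also have "\<dots> = (\<integral>\<omega>. (\<Sum>a\<in>UNIV. pl (past X l (int (Suc N)) \<omega>) a * u (past X l (int (Suc N)) \<omega>) a) \<partial>M)"
    by (rule step[OF um ub])
  also have "\<dots> \<le> (\<integral>\<omega>. H (past X l (int (Suc N)) \<omega>) \<partial>M)"
  proof (rule integral_mono)
    show "integrable M (\<lambda>\<omega>. \<Sum>a\<in>UNIV. pl (past X l (int (Suc N)) \<omega>) a * u (past X l (int (Suc N)) \<omega>) a)"
    proof (rule integrable_const_bound[where B="exp \<bar>t\<bar> ^ N * exp \<bar>t\<bar>"])
      show "AE x in M. norm (\<Sum>a\<in>UNIV. pl (past X l (int (Suc N)) x) a * u (past X l (int (Suc N)) x) a) \<le> exp \<bar>t\<bar> ^ N * exp \<bar>t\<bar>"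
      proof (intro AE_I2)
        fix x
        let ?y = "past X l (int (Suc N)) x"
        have "norm (\<Sum>a\<in>UNIV. pl ?y a * u ?y a) \<le> (\<Sum>a\<in>UNIV. pl ?y a * (exp \<bar>t\<bar> ^ N * exp \<bar>t\<bar>))"
          by (rule order_trans[OF norm_sum sum_mono])
             (auto simp: abs_mult pl_nonneg intro!: mult_left_mono ub)
        also have "\<dots> = exp \<bar>t\<bar> ^ N * exp \<bar>t\<bar>" by (simp add: sum_distrib_right[symmetric] pl_sum)
        finally show "norm (\<Sum>a\<in>UNIV. pl ?y a * u ?y a) \<le> exp \<bar>t\<bar> ^ N * exp \<bar>t\<bar>" .
      qed
    next
      have um2: "(\<lambda>\<omega>. u (past X l (int (Suc N)) \<omega>) a) \<in> borel_measurable M" for a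
        by (rule measurable_compose[OF past_meas um])
      show "(\<lambda>\<omega>. \<Sum>a\<in>UNIV. pl (past X l (int (Suc N)) \<omega>) a * u (past X l (int (Suc N)) \<omega>) a) \<in> borel_measurable M"
        by (intro borel_measurable_sum borel_measurable_times um2 measurable_compose[OF past_meas pl_meas])
    qed
    show "integrable M (\<lambda>\<omega>. H (past X l (int (Suc N)) \<omega>))"
      by (rule integrable_const_bound[where B="exp \<bar>t\<bar> ^ N"]) (use Hb in auto)
    fix \<omega>
    let ?y = "past X l (int (Suc N)) \<omega>"
    have "(\<Sum>a\<in>UNIV. pl ?y a * u ?y a) = H ?y * (\<Sum>a\<in>UNIV. pl ?y a * Zf pl t S (d (Suc N)) ?y a)"
      by (simp add: u_def sum_distrib_left algebra_simps)
    also have "\<dots> \<le> H ?y * 1" by (intro mult_left_mono Zf_mean d01) (use Hb in auto)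
    finally show "(\<Sum>a\<in>UNIV. pl ?y a * u ?y a) \<le> H ?y" by simp
  qed
  also have "\<dots> = (\<integral>\<omega>. (\<Prod>i\<in>{1..N}. Z i \<omega>) \<partial>M)"
    by (intro Bochner_Integration.integral_cong refl) (simp only: Hrep)
  also have "\<dots> \<le> 1" using Suc by (simp add: Z_def)
  finally show ?case by (simp add: Z_def)
qed


lemma bad_bound:
  assumes dm[measurable]: "\<And>i. d i \<in> borel_measurable pastM" and d01: "\<And>i x. d i x \<in> {0,1}"
  shows "measure M {\<omega>\<in>space M. exp K \<le> (\<Prod>i\<in>{1..N}. Zf pl t S (d i) (past X l (int i) \<omega>) (X l (int i) \<omega>))} \<le> exp (- K)"
proof -
  let ?u = "\<lambda>\<omega>. (\<Prod>i\<in>{1..N}. Zf pl t S (d i) (past X l (int i) \<omega>) (X l (int i) \<omega>))"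
  have int: "integrable M ?u"
  proof (rule integrable_const_bound[where B="exp \<bar>t\<bar> ^ N"])
    show "AE x in M. norm (?u x) \<le> exp \<bar>t\<bar> ^ N"
    proof (intro AE_I2)
      fix x
      have "?u x \<le> exp \<bar>t\<bar> ^ card {1..N}"
        by (intro prod_le_power) (auto intro: less_imp_le Zf_pos Zf_le[OF d01])
      moreover have "0 \<le> ?u x" by (intro prod_nonneg) (auto intro: less_imp_le Zf_pos)
      ultimately show "norm (?u x) \<le> exp \<bar>t\<bar> ^ N" by simp
    qed
  next
    show "?u \<in> borel_measurable M"
      by (intro borel_measurable_prod Zf_meas dm past_meas X_meas)
  qed
  have "measure M {\<omega>\<in>space M. exp K \<le> ?u \<omega>} \<le> (\<integral>x. ?u x \<partial>M) / exp K"
    by (rule integral_Markov_inequality_measure[OF int, where A="space M"])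
       (auto intro!: AE_I2 prod_nonneg intro: less_imp_le Zf_pos)
  also have "\<dots> \<le> 1 / exp K" by (intro divide_right_mono prod_le1 d01) (auto simp: dm)
  finally show ?thesis by (simp add: exp_minus field_simps)
qed

lemma occ_pred[measurable]: "Measurable.pred M (\<lambda>\<omega>. occ_at X l \<omega> w i)"
  unfolding occ_at_def by (intro pred_intros_countable pred_intros_imp' pred_count_space_const1 X_meas)

lemma Ncount_sum: "Ncount X l \<omega> j w = (\<Sum>i\<in>{length w..j}. if occ_at X l \<omega> w i then 1 else 0)"
  unfolding Ncount_def card_eq_sum by (rule sum.inter_filter) simp

lemma Ncount_real: "real (Ncount X l \<omega> j w) = (\<Sum>i\<in>{length w..j}. if occ_at X l \<omega> w i then 1 else 0)"
  unfolding Ncount_sum of_nat_sum by (intro sum.cong) auto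

lemma Ncount_meas[measurable]: "(\<lambda>\<omega>. real (Ncount X l \<omega> j w)) \<in> borel_measurable M"
  unfolding Ncount_real
  by (intro borel_measurable_sum measurable_If occ_pred[unfolded pred_def] borel_measurable_const)


lemma phat_meas: "(\<lambda>\<omega>. phat X n l \<omega> w S) \<in> borel_measurable M"
  unfolding phat_def by (intro borel_measurable_divide borel_measurable_sum Ncount_meas)

lemma pbar_meas: "p l = pl \<Longrightarrow> (\<lambda>\<omega>. pbar X p n l \<omega> w S) \<in> borel_measurable M"
  unfolding pbar_def
  by (intro borel_measurable_times borel_measurable_divide borel_measurable_const Ncount_meas
      borel_measurable_sum measurable_If occ_pred[unfolded pred_def] measurable_compose[OF past_meas]) 
     (simp add: pset_meas)

lemma dist_meas: "p l = pl \<Longrightarrow> finite Sfam \<Longrightarrow>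
   (\<lambda>\<omega>. dist_fam Sfam (pbar X p n l \<omega> w) (phat X n l \<omega> w)) \<in> borel_measurable M"
  unfolding dist_fam_def
  by (intro borel_measurable_Max borel_measurable_abs borel_measurable_diff pbar_meas phat_meas)

lemma conf_meas: "(\<lambda>\<omega>. conf X n L \<delta> Sfam l \<omega> w) \<in> borel_measurable M"
  unfolding conf_def by (intro borel_measurable_min cfun_meas Ncount_meas borel_measurable_const)


lemma occ_snoc:
  assumes "1 \<le> i"
  shows "occ_at X l \<omega> (w @ [a]) i \<longleftrightarrow> occ_at X l \<omega> w (i - 1) \<and> X l (int i) \<omega> = a"
proof -
  have ii: "int (i - 1) = int i - 1" using assms by simp
  have "occ_at X l \<omega> (w @ [a]) i \<longleftrightarrow>
     (\<forall>k<Suc (length w). X l (int i - int (length w) + int k) \<omega> = (w @ [a]) ! k)"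
    by (simp add: occ_at_def algebra_simps)
  also have "\<dots> \<longleftrightarrow> (\<forall>k<length w. X l (int i - int (length w) + int k) \<omega> = w ! k) \<and> X l (int i) \<omega> = a"
    by (auto simp: less_Suc_eq nth_append)
  also have "(\<forall>k<length w. X l (int i - int (length w) + int k) \<omega> = w ! k) \<longleftrightarrow> occ_at X l \<omega> w (i - 1)"
    using assms by (simp add: occ_at_def of_nat_diff algebra_simps)
  finally show ?thesis .
qed

lemma Dlink:
  assumes n1: "1 \<le> n" and pos: "0 < Ncount X l \<omega> (n - 1) w"
    and e: "e = Min {i \<in> {length w..n - 1}. occ_at X l \<omega> w i}"
    and i: "i \<in> {1..n}"
  shows "dd e (length w) i (past X l (int i) \<omega>)
       = (if length w + 1 \<le> i \<and> occ_at X l \<omega> w (i - 1) then 1 else 0)"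
proof -
  let ?m = "length w"
  define E where "E = {i \<in> {length w..n - 1}. occ_at X l \<omega> w i}"
  have fE: "finite E" unfolding E_def by simp
  have nE: "E \<noteq> {}" using pos unfolding Ncount_def E_def by (auto simp: card_gt_0_iff)
  have eE: "e \<in> E" using e Min_in[OF fE nE] unfolding E_def by simp
  have emin: "\<And>j. j \<in> E \<Longrightarrow> e \<le> j" using e fE unfolding E_def by simp
  have occe: "occ_at X l \<omega> w e" and me: "?m \<le> e" and en: "e \<le> n - 1" using eE unfolding E_def by auto
  have cond: "(e < i \<and> (\<forall>j<?m. past X l (int i) \<omega> (?m - 1 - j) = past X l (int i) \<omega> (i - 1 - e + (?m - 1 - j))))
      \<longleftrightarrow> (e < i \<and> occ_at X l \<omega> w (i - 1))"
  proof (cases "e < i")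
    case True
    have "past X l (int i) \<omega> (?m - 1 - j) = past X l (int i) \<omega> (i - 1 - e + (?m - 1 - j))
        \<longleftrightarrow> X l (int (i - 1) - int ?m + 1 + int j) \<omega> = w ! j" if j: "j < ?m" for j
    proof -
      have a: "past X l (int i) \<omega> (?m - 1 - j) = X l (int (i - 1) - int ?m + 1 + int j) \<omega>"
        using j True by (simp add: past_def of_nat_diff algebra_simps)
      have b: "past X l (int i) \<omega> (i - 1 - e + (?m - 1 - j)) = X l (int e - int ?m + 1 + int j) \<omega>"
        using j True by (simp add: past_def of_nat_diff algebra_simps)
      have c: "X l (int e - int ?m + 1 + int j) \<omega> = w ! j" using occe j unfolding occ_at_def by simp
      show ?thesis by (simp only: a b c)
    qed
    then show ?thesis using True by (auto simp: occ_at_def)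
  qed simp
  have "(e < i \<and> occ_at X l \<omega> w (i - 1)) \<longleftrightarrow> (?m + 1 \<le> i \<and> occ_at X l \<omega> w (i - 1))"
  proof
    assume "e < i \<and> occ_at X l \<omega> w (i - 1)" then show "?m + 1 \<le> i \<and> occ_at X l \<omega> w (i - 1)"
      using me by auto
  next
    assume a: "?m + 1 \<le> i \<and> occ_at X l \<omega> w (i - 1)"
    then have "i - 1 \<in> E" using i unfolding E_def by auto
    then have "e \<le> i - 1" by (rule emin)
    then show "e < i \<and> occ_at X l \<omega> w (i - 1)" using a by auto
  qed
  with cond show ?thesis by (simp add: dd_def)
qed


definition Dw :: "'b \<Rightarrow> 'a list \<Rightarrow> nat \<Rightarrow> real" where
  "Dw \<omega> w i = (if length w + 1 \<le> i \<and> occ_at X l \<omega> w (i - 1) then 1 else 0)"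

lemma sumN:
  assumes "1 \<le> n"
  shows "real (Ncount X l \<omega> (n - 1) w) = (\<Sum>i\<in>{1..n}. Dw \<omega> w i)"
proof -
  have "real (Ncount X l \<omega> (n - 1) w) = (\<Sum>i\<in>{length w..n-1}. if occ_at X l \<omega> w i then 1 else 0)"
    by (rule Ncount_real)
  also have "\<dots> = (\<Sum>i\<in>{length w+1..n}. if occ_at X l \<omega> w (i - 1) then 1 else 0)"
    by (rule sum_shift1[OF assms, symmetric])
  also have "\<dots> = (\<Sum>i\<in>{1..n}. Dw \<omega> w i)"
    by (subst sum_ext_guard) (auto simp: Dw_def intro!: sum.cong)
  finally show ?thesis .
qed

lemma sumA:
  shows "(\<Sum>a\<in>S. real (Ncount X l \<omega> n (w @ [a]))) = (\<Sum>i\<in>{1..n}. Dw \<omega> w i * indicator S (X l (int i) \<omega>))"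
proof -
  have "(\<Sum>a\<in>S. real (Ncount X l \<omega> n (w @ [a])))
      = (\<Sum>a\<in>S. \<Sum>i\<in>{length w + 1..n}. if occ_at X l \<omega> w (i - 1) \<and> X l (int i) \<omega> = a then 1 else 0)"
    by (intro sum.cong refl) (auto simp: Ncount_real occ_snoc intro!: sum.cong)
  also have "\<dots> = (\<Sum>i\<in>{length w + 1..n}. \<Sum>a\<in>S. if occ_at X l \<omega> w (i - 1) \<and> X l (int i) \<omega> = a then 1 else 0)"
    by (rule sum.swap)
  also have "\<dots> = (\<Sum>i\<in>{length w + 1..n}. (if occ_at X l \<omega> w (i - 1) then 1 else 0) * indicator S (X l (int i) \<omega>))"
  proof (intro sum.cong refl)
    fix i
    show "(\<Sum>a\<in>S. if occ_at X l \<omega> w (i - 1) \<and> X l (int i) \<omega> = a then 1 else (0::real))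
        = (if occ_at X l \<omega> w (i - 1) then 1 else 0) * indicator S (X l (int i) \<omega>)"
      by (cases "occ_at X l \<omega> w (i - 1)") (auto simp: indicator_def sum.delta)
  qed
  also have "\<dots> = (\<Sum>i\<in>{1..n}. Dw \<omega> w i * indicator S (X l (int i) \<omega>))"
    by (subst sum_ext_guard) (intro sum.cong refl, simp add: Dw_def)
  finally show ?thesis .
qed

lemma sumB:
  shows "(\<Sum>i = length w + 1..n. (if occ_at X l \<omega> w (i - 1) then 1 else 0) * pset pl S (past X l (int i) \<omega>))
       = (\<Sum>i\<in>{1..n}. Dw \<omega> w i * pset pl S (past X l (int i) \<omega>))"
  by (subst sum_ext_guard) (auto simp: Dw_def intro!: sum.cong)

lemma prod_exp:
  assumes n1: "1 \<le> n" and pos: "0 < Ncount X l \<omega> (n - 1) w"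
    and e: "e = Min {i \<in> {length w..n - 1}. occ_at X l \<omega> w i}"
  shows "(\<Prod>i\<in>{1..n}. Zf pl t S (dd e (length w) i) (past X l (int i) \<omega>) (X l (int i) \<omega>))
    = exp (t * (\<Sum>i\<in>{1..n}. Dw \<omega> w i * (indicator S (X l (int i) \<omega>) - pset pl S (past X l (int i) \<omega>)))
           - t\<^sup>2 * (\<Sum>i\<in>{1..n}. Dw \<omega> w i) / 8)"
proof -
  have "(\<Prod>i\<in>{1..n}. Zf pl t S (dd e (length w) i) (past X l (int i) \<omega>) (X l (int i) \<omega>))
      = (\<Prod>i\<in>{1..n}. exp (t * Dw \<omega> w i * (indicator S (X l (int i) \<omega>) - pset pl S (past X l (int i) \<omega>)) - t\<^sup>2 * Dw \<omega> w i / 8))"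
    by (intro prod.cong refl) (simp add: Zf_def Dlink[OF n1 pos e] Dw_def)
  also have "\<dots> = exp (\<Sum>i\<in>{1..n}. t * Dw \<omega> w i * (indicator S (X l (int i) \<omega>) - pset pl S (past X l (int i) \<omega>)) - t\<^sup>2 * Dw \<omega> w i / 8)"
    by (rule exp_sum[symmetric]) simp
  also have "(\<Sum>i\<in>{1..n}. t * Dw \<omega> w i * (indicator S (X l (int i) \<omega>) - pset pl S (past X l (int i) \<omega>)) - t\<^sup>2 * Dw \<omega> w i / 8)
     = t * (\<Sum>i\<in>{1..n}. Dw \<omega> w i * (indicator S (X l (int i) \<omega>) - pset pl S (past X l (int i) \<omega>)))
           - t\<^sup>2 * (\<Sum>i\<in>{1..n}. Dw \<omega> w i) / 8"
    by (simp add: sum_subtractf sum_distrib_left sum_divide_distrib mult.assoc)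
  finally show ?thesis .
qed


lemma Ncount_le: "1 \<le> n \<Longrightarrow> Ncount X l \<omega> (n - 1) w \<le> n"
proof -
  assume "1 \<le> n"
  have "Ncount X l \<omega> (n - 1) w \<le> card {length w..n-1}" unfolding Ncount_def
    by (intro card_mono) auto
  also have "\<dots> \<le> n" using \<open>1 \<le> n\<close> by simp
  finally show ?thesis .
qed

lemma bad_event:
  assumes n1: "1 \<le> n" and pos: "0 < Ncount X l \<omega> (n - 1) w" and plp: "p l = pl"
    and e: "e = Min {i \<in> {length w..n - 1}. occ_at X l \<omega> w i}"
    and c0: "0 \<le> c" and cdef: "c = cfun (Ncount X l \<omega> (n - 1) w) \<epsilon>"
    and bad: "min c 1 < \<bar>pbar X p n l \<omega> w S - phat X n l \<omega> w S\<bar>"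
  shows "\<exists>\<sigma>::bool. exp (2 * c\<^sup>2 * real (Ncount X l \<omega> (n - 1) w))
     \<le> (\<Prod>i\<in>{1..n}. Zf pl (if \<sigma> then 4 * c else - 4 * c) S (dd e (length w) i) (past X l (int i) \<omega>) (X l (int i) \<omega>))"
proof -
  define N where "N = real (Ncount X l \<omega> (n - 1) w)"
  define A where "A = (\<Sum>i\<in>{1..n}. Dw \<omega> w i * indicator S (X l (int i) \<omega>))"
  define B where "B = (\<Sum>i\<in>{1..n}. Dw \<omega> w i * pset pl S (past X l (int i) \<omega>))"
  have Np: "0 < N" using pos by (simp add: N_def)
  have NS: "N = (\<Sum>i\<in>{1..n}. Dw \<omega> w i)" unfolding N_def by (rule sumN[OF n1])
  have D01: "0 \<le> Dw \<omega> w i" "Dw \<omega> w i \<le> 1" for i by (auto simp: Dw_def)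
  have A0: "0 \<le> A" unfolding A_def by (intro sum_nonneg) (simp add: D01)
  have AN: "A \<le> N" unfolding A_def NS
    by (intro sum_mono) (auto simp: Dw_def indicator_def)
  have B0: "0 \<le> B" unfolding B_def by (intro sum_nonneg mult_nonneg_nonneg D01 pset_nonneg)
  have BN: "B \<le> N" unfolding B_def NS
    by (intro sum_mono) (auto simp: Dw_def pset_le1)
  have phat: "phat X n l \<omega> w S = A / N" unfolding phat_def A_def N_def by (simp add: sumA)
  have pbar: "pbar X p n l \<omega> w S = B / N" unfolding pbar_def B_def N_def plp sumB by simp
  have "\<bar>B / N - A / N\<bar> = \<bar>B - A\<bar> / N" using Np by (simp add: diff_divide_distrib[symmetric] abs_divide)
  with bad have "min c 1 < \<bar>B - A\<bar> / N" by (simp add: phat pbar)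
  then have lt: "N * min c 1 < \<bar>B - A\<bar>" using Np by (simp add: field_simps)
  have "\<bar>B - A\<bar> \<le> N" using A0 AN B0 BN by linarith
  then have Nc: "N * c < \<bar>B - A\<bar>" using lt Np
    by (cases "c \<le> 1") (auto simp: min_def)
  have Mdev: "(\<Sum>i\<in>{1..n}. Dw \<omega> w i * (indicator S (X l (int i) \<omega>) - pset pl S (past X l (int i) \<omega>))) = A - B"
    unfolding A_def B_def by (simp add: right_diff_distrib sum_subtractf)
  have pe: "\<And>t. (\<Prod>i\<in>{1..n}. Zf pl t S (dd e (length w) i) (past X l (int i) \<omega>) (X l (int i) \<omega>))
     = exp (t * (A - B) - t\<^sup>2 * N / 8)"
    by (subst prod_exp[OF n1 pos e]) (simp only: Mdev NS[symmetric])
  show ?thesis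
  proof (cases "A - B > N * c")
    case True
    have "2 * c\<^sup>2 * N \<le> 4 * c * (A - B) - (4 * c)\<^sup>2 * N / 8"
    proof -
      have "4 * c * (N * c) \<le> 4 * c * (A - B)" using True c0 by (intro mult_left_mono) auto
      then show ?thesis by (simp add: power2_eq_square algebra_simps)
    qed
    then have "exp (2 * c\<^sup>2 * N) \<le> exp ((4 * c) * (A - B) - (4 * c)\<^sup>2 * N / 8)" by simp
    also have "\<dots> = (\<Prod>i\<in>{1..n}. Zf pl (4 * c) S (dd e (length w) i) (past X l (int i) \<omega>) (X l (int i) \<omega>))"
      by (rule pe[symmetric])
    finally show ?thesis unfolding N_def by (intro exI[of _ True]) simp
  next
    case False
    then have "B - A > N * c" using Nc by linarith
    have "2 * c\<^sup>2 * N \<le> (- 4 * c) * (A - B) - (- 4 * c)\<^sup>2 * N / 8"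
    proof -
      have "4 * c * (N * c) \<le> 4 * c * (B - A)" using \<open>B - A > N * c\<close> c0 by (intro mult_left_mono) auto
      then show ?thesis by (simp add: power2_eq_square algebra_simps)
    qed
    then have "exp (2 * c\<^sup>2 * N) \<le> exp ((- 4 * c) * (A - B) - (- 4 * c)\<^sup>2 * N / 8)" by simp
    also have "\<dots> = (\<Prod>i\<in>{1..n}. Zf pl (- 4 * c) S (dd e (length w) i) (past X l (int i) \<omega>) (X l (int i) \<omega>))"
      by (rule pe[symmetric])
    finally show ?thesis unfolding N_def by (intro exI[of _ False]) simp
  qed
qed


lemma bad_sets:
  assumes dm: "\<And>i. d i \<in> borel_measurable pastM"
  shows "{\<omega>\<in>space M. exp K \<le> (\<Prod>i\<in>{1..N}. Zf pl t S (d i) (past X l (int i) \<omega>) (X l (int i) \<omega>))} \<in> sets M"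
  by (intro borel_measurable_le borel_measurable_const borel_measurable_prod Zf_meas dm past_meas X_meas)

end

theorem theorem4p1:
  fixes M :: "'b measure"
    and X :: "nat \<Rightarrow> int \<Rightarrow> 'b \<Rightarrow> 'a::finite"
    and p :: "nat \<Rightarrow> (nat \<Rightarrow> 'a) \<Rightarrow> 'a \<Rightarrow> real"
    and L n :: nat and \<delta> :: real and Sfam :: "'a set set"
  assumes "prob_space M"
    and "L \<ge> 1" and "n \<ge> 1"
    and "\<And>l. l \<in> {1..L} \<Longrightarrow> stationary_ergodic M X l"
    and "\<And>l. l \<in> {1..L} \<Longrightarrow> is_transition_prob M X l (p l)"
    and "Sfam = {{a} | a. True} \<or> Sfam = Pow UNIV"
    and "0 < \<delta>" and "\<delta> < 1"
  shows "measure M {\<omega> \<in> space M. Good_inf X p n L \<delta> Sfam \<omega>} \<ge> 1 - \<delta>"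
proof -
  interpret P: prob_space M by (rule assms(1))
  have L1: "1 \<le> L" and n1: "1 \<le> n" using assms(2,3) by auto
  have prc: "proc M X l (p l)" if "l \<in> {1..L}" for l
    using assms(1,4,5) that by (simp add: proc_def)
  have fS: "finite Sfam"
  proof -
    have "Sfam \<subseteq> Pow UNIV" by auto
    then show ?thesis by (rule finite_subset) simp
  qed
  have neS: "Sfam \<noteq> {}" using assms(6) by auto
  have cS: "1 \<le> card Sfam" using fS neS by (simp add: Suc_le_eq card_gt_0_iff)
  define Dn where "Dn = real n ^ 2 * real (card Sfam) * real L"
  define \<epsilon> where "\<epsilon> = \<delta> / (real n ^ 2 * real (card Sfam) * real L)"
  have n2: "real n \<le> real n ^ 2" using n1 by (simp add: power2_eq_square)
  have Dn_ge: "real n \<le> Dn"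
  proof -
    have "real n * 1 * 1 \<le> real n ^ 2 * real (card Sfam) * real L"
      using n2 cS L1 by (intro mult_mono) auto
    then show ?thesis by (simp add: Dn_def)
  qed
  have Dn1: "1 \<le> Dn" using Dn_ge n1 by linarith
  have eD: "\<epsilon> * Dn = \<delta>" using Dn1 by (simp add: \<epsilon>_def Dn_def[symmetric])
  have e0: "0 < \<epsilon>" using assms(7) Dn1 by (simp add: \<epsilon>_def Dn_def[symmetric])
  have e1: "\<epsilon> < 1"
  proof -
    have "\<epsilon> \<le> \<delta>" using assms(7) Dn1 by (simp add: \<epsilon>_def Dn_def[symmetric] divide_le_eq)
    then show ?thesis using assms(8) by linarith
  qed
  define Bad where "Bad = (\<lambda>(l::nat, S::'a set, e::nat, m::nat, k::nat, \<sigma>::bool).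
     {\<omega>\<in>space M. exp (2 * (cfun k \<epsilon>)\<^sup>2 * real k) \<le> (\<Prod>i\<in>{1..n}. Zf (p l) (if \<sigma> then 4 * cfun k \<epsilon> else - 4 * cfun k \<epsilon>) S (dd e m i) (past X l (int i) \<omega>) (X l (int i) \<omega>))})"
  define I where "I = {1..L} \<times> Sfam \<times> {..<n} \<times> {..<n} \<times> {1..n} \<times> (UNIV :: bool set)"
  have fI: "finite I" unfolding I_def using fS by simp
  have Bsets: "Bad ` I \<subseteq> sets M"
  proof safe
    fix l S e m k \<sigma> assume "(l, S, e, m, k, \<sigma>) \<in> I"
    then have l: "l \<in> {1..L}" unfolding I_def by auto
    interpret proc M X l "p l" by (rule prc[OF l])
    show "Bad (l, S, e, m, k, \<sigma>) \<in> sets M" unfolding Bad_def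
      by (simp only: case_prod_conv) (rule bad_sets[OF dd_meas])
  qed
  have Bmeas: "measure M (Bad \<iota>) \<le> \<epsilon> ^ 8 / 65536" if "\<iota> \<in> I" for \<iota>
  proof -
    obtain l S e m k \<sigma> where i: "\<iota> = (l, S, e, m, k, \<sigma>)" by (cases \<iota>) auto
    then have l: "l \<in> {1..L}" and k: "1 \<le> k" using that unfolding I_def by auto
    interpret proc M X l "p l" by (rule prc[OF l])
    have "measure M (Bad \<iota>) \<le> exp (- (2 * (cfun k \<epsilon>)\<^sup>2 * real k))" unfolding Bad_def i
      by (simp only: case_prod_conv) (rule bad_bound[OF dd_meas dd01])
    also have "\<dots> \<le> \<epsilon> ^ 8 / 65536" by (rule cfun_facts(2)[OF k e0 e1])
    finally show ?thesis .
  qed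
  have Gm: "{\<omega> \<in> space M. Good_inf X p n L \<delta> Sfam \<omega>} \<in> sets M"
  proof -
    have q1: "Measurable.pred M (\<lambda>\<omega>. 0 < Ncount X l \<omega> (n - 1) w)" if l: "l \<in> {1..L}" for l w
    proof -
      interpret proc M X l "p l" by (rule prc[OF l])
      have "{\<omega>\<in>space M. 0 < real (Ncount X l \<omega> (n - 1) w)} \<in> sets M"
        by (rule borel_measurable_less[OF borel_measurable_const Ncount_meas])
      then show ?thesis by (simp only: pred_def of_nat_0_less_iff)
    qed
    have q2: "Measurable.pred M (\<lambda>\<omega>. Max ((\<lambda>l. dist_fam Sfam (pbar X p n l \<omega> w) (phat X n l \<omega> w)
                   / conf X n L \<delta> Sfam l \<omega> w) ` {1..L}) \<le> 1)" for w
    proof -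
      have "(\<lambda>\<omega>. Max ((\<lambda>l. dist_fam Sfam (pbar X p n l \<omega> w) (phat X n l \<omega> w)
                   / conf X n L \<delta> Sfam l \<omega> w) ` {1..L})) \<in> borel_measurable M"
      proof (rule borel_measurable_Max)
        fix l assume l: "l \<in> {1..L}"
        interpret proc M X l "p l" by (rule prc[OF l])
        show "(\<lambda>\<omega>. dist_fam Sfam (pbar X p n l \<omega> w) (phat X n l \<omega> w) / conf X n L \<delta> Sfam l \<omega> w) \<in> borel_measurable M"
          by (intro borel_measurable_divide dist_meas conf_meas fS refl)
      qed simp
      then have "{\<omega>\<in>space M. Max ((\<lambda>l. dist_fam Sfam (pbar X p n l \<omega> w) (phat X n l \<omega> w)
                   / conf X n L \<delta> Sfam l \<omega> w) ` {1..L}) \<le> 1} \<in> sets M"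
        by (rule borel_measurable_le[OF _ borel_measurable_const])
      then show ?thesis by (simp only: pred_def)
    qed
    have "Measurable.pred M (Good_inf X p n L \<delta> Sfam)" unfolding Good_inf_def
      by (intro pred_intros_countable(1) pred_intros_logic(4) pred_intros_countable_bounded(3) q1 q2)
    then show ?thesis by (simp only: pred_def)
  qed
  have incl: "space M - {\<omega> \<in> space M. Good_inf X p n L \<delta> Sfam \<omega>} \<subseteq> (\<Union>\<iota>\<in>I. Bad \<iota>)"
  proof
    fix \<omega> assume \<omega>: "\<omega> \<in> space M - {\<omega> \<in> space M. Good_inf X p n L \<delta> Sfam \<omega>}"
    then obtain w where pos: "\<forall>l\<in>{1..L}. 0 < Ncount X l \<omega> (n - 1) w"
      and big: "\<not> Max ((\<lambda>l. dist_fam Sfam (pbar X p n l \<omega> w) (phat X n l \<omega> w)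
                   / conf X n L \<delta> Sfam l \<omega> w) ` {1..L}) \<le> 1"
      by (auto simp: Good_inf_def)
    obtain l where l: "l \<in> {1..L}"
      and lbig: "1 < dist_fam Sfam (pbar X p n l \<omega> w) (phat X n l \<omega> w) / conf X n L \<delta> Sfam l \<omega> w"
      using big L1 by (auto simp: not_le Max_gr_iff)
    interpret proc M X l "p l" by (rule prc[OF l])
    define N where "N = Ncount X l \<omega> (n - 1) w"
    define c where "c = cfun N \<epsilon>"
    have Np: "0 < N" using pos l by (simp add: N_def)
    have Nn: "N \<le> n" unfolding N_def by (rule Ncount_le[OF n1])
    have cpos: "0 < c" unfolding c_def using cfun_facts(1)[OF _ e0 e1, of N] Np by simp
    have confc: "conf X n L \<delta> Sfam l \<omega> w = min c 1"
      by (simp add: conf_def c_def N_def \<epsilon>_def)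
    have confp: "0 < min c 1" using cpos by simp
    have "min c 1 < dist_fam Sfam (pbar X p n l \<omega> w) (phat X n l \<omega> w)"
      using lbig confp by (simp add: confc less_divide_eq)
    then obtain S where S: "S \<in> Sfam" and Sbig: "min c 1 < \<bar>pbar X p n l \<omega> w S - phat X n l \<omega> w S\<bar>"
      using fS neS by (auto simp: dist_fam_def Max_gr_iff)
    define e where "e = Min {i \<in> {length w..n - 1}. occ_at X l \<omega> w i}"
    have fE: "finite {i \<in> {length w..n - 1}. occ_at X l \<omega> w i}" by simp
    have nE: "{i \<in> {length w..n - 1}. occ_at X l \<omega> w i} \<noteq> {}"
      using Np unfolding N_def Ncount_def by (auto simp: card_gt_0_iff)
    have "e \<in> {i \<in> {length w..n - 1}. occ_at X l \<omega> w i}" unfolding e_def by (rule Min_in[OF fE nE])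
    then have en: "e < n" and me: "length w < n" using n1 by auto
    have "\<exists>\<sigma>. exp (2 * c\<^sup>2 * real (Ncount X l \<omega> (n - 1) w))
      \<le> (\<Prod>i\<in>{1..n}. Zf (p l) (if \<sigma> then 4 * c else - 4 * c) S (dd e (length w) i) (past X l (int i) \<omega>) (X l (int i) \<omega>))"
      by (rule bad_event[OF n1]) (use Np cpos Sbig in \<open>simp_all add: N_def e_def c_def\<close>)
    then obtain \<sigma> where \<sigma>: "exp (2 * c\<^sup>2 * real N)
      \<le> (\<Prod>i\<in>{1..n}. Zf (p l) (if \<sigma> then 4 * c else - 4 * c) S (dd e (length w) i) (past X l (int i) \<omega>) (X l (int i) \<omega>))"
      unfolding N_def by blast
    have "(l, S, e, length w, N, \<sigma>) \<in> I" unfolding I_def using l S en me Np Nn by auto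
    moreover have "\<omega> \<in> Bad (l, S, e, length w, N, \<sigma>)" unfolding Bad_def using \<sigma> \<omega> by (cases \<sigma>) (simp_all add: c_def[symmetric])
    ultimately show "\<omega> \<in> (\<Union>\<iota>\<in>I. Bad \<iota>)" by blast
  qed
  have Um: "(\<Union>\<iota>\<in>I. Bad \<iota>) \<in> sets M" using Bsets fI by (intro sets.finite_UN) auto
  have "measure M (space M - {\<omega> \<in> space M. Good_inf X p n L \<delta> Sfam \<omega>}) \<le> measure M (\<Union>\<iota>\<in>I. Bad \<iota>)"
    by (rule P.finite_measure_mono[OF incl Um])
  also have "\<dots> \<le> (\<Sum>\<iota>\<in>I. measure M (Bad \<iota>))"
    by (rule P.finite_measure_subadditive_finite[OF fI Bsets])
  also have "\<dots> \<le> (\<Sum>\<iota>\<in>I. \<epsilon> ^ 8 / 65536)" by (intro sum_mono Bmeas)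
  also have "\<dots> = real (card I) * \<epsilon> ^ 8 / 65536" by simp
  also have "\<dots> \<le> \<delta>"
  proof -
    have cI: "real (card I) = 2 * real n * Dn"
      unfolding I_def Dn_def by (simp add: card_cartesian_product power2_eq_square)
    have ne: "real n * \<epsilon> \<le> 1"
    proof -
      have "real n * \<epsilon> \<le> Dn * \<epsilon>" using Dn_ge e0 by (intro mult_right_mono) auto
      then show ?thesis using eD assms(8) by (simp add: mult.commute)
    qed
    have e6: "\<epsilon> ^ 6 \<le> 1" using e0 e1 by (simp add: power_le_one)
    have "real (card I) * \<epsilon> ^ 8 / 65536 = 2 * (real n * \<epsilon>) * \<epsilon> ^ 6 * (\<epsilon> * Dn) / 65536"
    proof -
      have p8: "\<epsilon> ^ 8 = \<epsilon> ^ 6 * \<epsilon> * \<epsilon>"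
      proof -
        have "\<epsilon> ^ 8 = \<epsilon> ^ (6 + 1 + 1)" by simp
        also have "\<dots> = \<epsilon> ^ 6 * \<epsilon> * \<epsilon>" by (simp only: power_add power_one_right)
        finally show ?thesis .
      qed
      show ?thesis by (simp only: cI p8 mult.assoc mult.commute mult.left_commute)
    qed
    also have "\<dots> = 2 * ((real n * \<epsilon>) * \<epsilon> ^ 6) * \<delta> / 65536" by (simp add: eD)
    also have "\<dots> \<le> 2 * (1 * 1) * \<delta> / 65536"
      using ne e6 e0 assms(7) by (intro divide_right_mono mult_right_mono mult_left_mono mult_mono) auto
    also have "\<dots> \<le> \<delta>" using assms(7) by simp
    finally show ?thesis .
  qed
  finally have "measure M (space M - {\<omega> \<in> space M. Good_inf X p n L \<delta> Sfam \<omega>}) \<le> \<delta>" .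
  moreover have "measure M (space M - {\<omega> \<in> space M. Good_inf X p n L \<delta> Sfam \<omega>})
      = 1 - measure M {\<omega> \<in> space M. Good_inf X p n L \<delta> Sfam \<omega>}"
    by (rule P.prob_compl[OF Gm])
  ultimately show ?thesis by simp
qed

end
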